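(* Let $\Gamma$ be a lattice with periodic boundary conditions as below, let $\mathcal{X}$ be an artificial boundary, and let $\mathcal{E}\subseteq C_2(\Gamma)$ be a set of faces with $\mathcal{E}\cap\mathcal{X}=\emptyset$. Suppose $M$ is an $X$-type logical operator equivalent to one of the $\bar X_i$ (i.e. $M\bar X_i$ is an $X$-type stabilizer for some $i$) with $\mathrm{supp}(M)\subseteq\mathcal{E}$. Then $\mathcal{E}\cup\mathcal{X}$ is a cut set of $\Gamma$.
   Context: $\Gamma$ is a finite, connected three-dimensional cell complex without boundary (periodic boundary conditions), with edges $C_1(\Gamma)$, faces $C_2(\Gamma)$, volumes $C_3(\Gamma)$; every face lies in the boundary of exactly two distinct volumes and the dual complex is connected. $\partial(\nu)$ is the set of boundary faces of volume $\nu$ and $\iota(e)$ the set of faces containing edge $e$. The 3D toric code on $\Gamma$ has one qubit per face, stabilizer group generated by $B_e=\prod_{f\in\iota(e)}Z_f$ and $A_\nu=\prod_{f\in\partial(\nu)}X_f$, and encodes $k$ logical qubits; a logical operator is a Pauli operator commuting with all stabilizers but not in the stabilizer group (up to phase); $X_S=\prod_{f\in S}X_f$ and $\mathrm{supp}(P)$ is the set of faces where $P$ acts nontrivially. Fix $X$-type logical operators $\bar X_1,\dots,\bar X_k$, one per logical qubit. An artificial boundary is a set $\mathcal{X}=\bigcup_{i=1}^k\mathrm{supp}(\bar X_i^r)$, where each $\bar X_i^r$ is an $X$-type operator with $\bar X_i^r\bar X_i$ an $X$-type stabilizer, such that $\mathcal{X}$ contains no nonempty set $S$ with $X_S$ a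 stabilizer. A face path is a sequence of faces $\rho=(f_1,\dots,f_m)$ with pairwise distinct volumes $\Lambda(\rho)=(\nu_1,\dots,\nu_{m-1})$, $f_i,f_{i+1}\in\partial(\nu_i)$. A set of faces $K$ is a cut set of $\Gamma$ if there exist volumes $\nu,\nu'$ such that every face path $\rho$ with $f_1\in\partial(\nu)$, $f_m\in\partial(\nu')$ and $\nu,\nu'\notin\Lambda(\rho)$ meets $K$. *)

theory Defs
  imports Main
begin

text \<open>Combinatorial model of the cell complex Gamma: a set Ed of edges, Fa of faces,
Vo of volumes; bd v is the set of boundary faces of volume v, iota e the set of faces
containing edge e.  X-type Pauli operators (up to phase) are identified with their
supports, i.e. sets of faces; multiplication of X-type operators is symmetric difference.\<close>

definition symd :: "'a set \<Rightarrow> 'a set \<Rightarrow> 'a set" where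
  "symd A B = (A - B) \<union> (B - A)"

text \<open>Product over a finite index set, i.e. the mod-2 sum of supports.\<close>
definition sum2 :: "'i set \<Rightarrow> ('i \<Rightarrow> 'a set) \<Rightarrow> 'a set" where
  "sum2 I S = {x. odd (card {i\<in>I. x \<in> S i})}"

definition dual_connected :: "'v set \<Rightarrow> ('v \<Rightarrow> 'f set) \<Rightarrow> bool" where
  "dual_connected Vo bd \<longleftrightarrow>
     (\<forall>v\<in>Vo. \<forall>w\<in>Vo. (v, w) \<in> {(a, b). a \<in> Vo \<and> b \<in> Vo \<and> bd a \<inter> bd b \<noteq> {}}\<^sup>*)"

text \<open>Standing assumptions on Gamma: finite, without boundary (every face lies in the
boundary of exactly two distinct volumes), boundary of boundary is zero (each edge lies
in an even number of faces of each volume, so the stabilizers commute), connected dual.\<close>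
definition periodic_complex ::
  "'e set \<Rightarrow> 'f set \<Rightarrow> 'v set \<Rightarrow> ('v \<Rightarrow> 'f set) \<Rightarrow> ('e \<Rightarrow> 'f set) \<Rightarrow> bool" where
  "periodic_complex Ed Fa Vo bd iota \<longleftrightarrow>
     finite Ed \<and> finite Fa \<and> finite Vo \<and>
     (\<forall>v\<in>Vo. bd v \<subseteq> Fa) \<and> (\<forall>e\<in>Ed. iota e \<subseteq> Fa) \<and>
     (\<forall>f\<in>Fa. card {v\<in>Vo. f \<in> bd v} = 2) \<and>
     (\<forall>e\<in>Ed. \<forall>v\<in>Vo. even (card (iota e \<inter> bd v))) \<and>
     dual_connected Vo bd"

text \<open>X_S is (up to phase) in the stabilizer group iff S is a product of volume stabilizers A_v.\<close>
definition is_x_stabilizer :: "'v set \<Rightarrow> ('v \<Rightarrow> 'f set) \<Rightarrow> 'f set \<Rightarrow> bool" where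
  "is_x_stabilizer Vo bd S \<longleftrightarrow> (\<exists>W\<subseteq>Vo. S = sum2 W bd)"

text \<open>X_S commutes with every B_e (it always commutes with the A_v).\<close>
definition commutes_with_stabilizers :: "'e set \<Rightarrow> ('e \<Rightarrow> 'f set) \<Rightarrow> 'f set \<Rightarrow> bool" where
  "commutes_with_stabilizers Ed iota S \<longleftrightarrow> (\<forall>e\<in>Ed. even (card (S \<inter> iota e)))"

definition x_logical ::
  "'e set \<Rightarrow> 'f set \<Rightarrow> 'v set \<Rightarrow> ('v \<Rightarrow> 'f set) \<Rightarrow> ('e \<Rightarrow> 'f set) \<Rightarrow> 'f set \<Rightarrow> bool" where
  "x_logical Ed Fa Vo bd iota S \<longleftrightarrow>
     S \<subseteq> Fa \<and> commutes_with_stabilizers Ed iota S \<and> \<not> is_x_stabilizer Vo bd S"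

text \<open>Xbar 0, ..., Xbar (k-1): one X-type logical operator per logical qubit, i.e. their
classes form a basis of the X-type logical operators modulo X-type stabilizers.\<close>
definition x_logical_basis ::
  "'e set \<Rightarrow> 'f set \<Rightarrow> 'v set \<Rightarrow> ('v \<Rightarrow> 'f set) \<Rightarrow> ('e \<Rightarrow> 'f set) \<Rightarrow> nat \<Rightarrow> (nat \<Rightarrow> 'f set) \<Rightarrow> bool" where
  "x_logical_basis Ed Fa Vo bd iota k Xbar \<longleftrightarrow>
     (\<forall>i<k. x_logical Ed Fa Vo bd iota (Xbar i)) \<and>
     (\<forall>S\<subseteq>Fa. commutes_with_stabilizers Ed iota S \<longrightarrow>
        (\<exists>!I. I \<subseteq> {..<k} \<and> is_x_stabilizer Vo bd (symd S (sum2 I Xbar))))"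

definition artificial_boundary ::
  "'f set \<Rightarrow> 'v set \<Rightarrow> ('v \<Rightarrow> 'f set) \<Rightarrow> nat \<Rightarrow> (nat \<Rightarrow> 'f set) \<Rightarrow> (nat \<Rightarrow> 'f set) \<Rightarrow> 'f set \<Rightarrow> bool" where
  "artificial_boundary Fa Vo bd k Xbar Xr XX \<longleftrightarrow>
     XX = (\<Union>i<k. Xr i) \<and>
     (\<forall>i<k. Xr i \<subseteq> Fa \<and> is_x_stabilizer Vo bd (symd (Xr i) (Xbar i))) \<and>
     (\<forall>S. S \<subseteq> XX \<and> S \<noteq> {} \<longrightarrow> \<not> is_x_stabilizer Vo bd S)"

definition face_path ::
  "'f set \<Rightarrow> 'v set \<Rightarrow> ('v \<Rightarrow> 'f set) \<Rightarrow> 'f list \<Rightarrow> 'v list \<Rightarrow> bool" where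
  "face_path Fa Vo bd fs vs \<longleftrightarrow>
     fs \<noteq> [] \<and> length vs = length fs - 1 \<and> set fs \<subseteq> Fa \<and> set vs \<subseteq> Vo \<and> distinct vs \<and>
     (\<forall>i<length vs. fs ! i \<in> bd (vs ! i) \<and> fs ! (Suc i) \<in> bd (vs ! i))"

definition cut_set :: "'f set \<Rightarrow> 'v set \<Rightarrow> ('v \<Rightarrow> 'f set) \<Rightarrow> 'f set \<Rightarrow> bool" where
  "cut_set Fa Vo bd K \<longleftrightarrow>
     (\<exists>v\<in>Vo. \<exists>v'\<in>Vo. \<forall>fs vs.
        face_path Fa Vo bd fs vs \<and> hd fs \<in> bd v \<and> last fs \<in> bd v' \<and>
        v \<notin> set vs \<and> v' \<notin> set vs \<longrightarrow> set fs \<inter> K \<noteq> {})"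

end

theory Submission
  imports Defs
begin

lemma sum2_symd:
  assumes "finite W1" "finite W2"
  shows "sum2 (symd W1 W2) S = symd (sum2 W1 S) (sum2 W2 S)"
proof -
  have "odd (card {i\<in>symd W1 W2. x \<in> S i}) \<longleftrightarrow>
        (odd (card {i\<in>W1. x \<in> S i}) \<noteq> odd (card {i\<in>W2. x \<in> S i}))" for x
  proof -
    define A where "A = {i\<in>W1. x \<in> S i}"
    define B where "B = {i\<in>W2. x \<in> S i}"
    have fA: "finite A" "finite B" using assms by (auto simp: A_def B_def)
    have e: "{i\<in>symd W1 W2. x \<in> S i} = (A - B) \<union> (B - A)"
      by (auto simp: A_def B_def symd_def)
    have c1: "card ((A - B) \<union> (B - A)) = card (A - B) + card (B - A)"
      by (rule card_Un_disjoint) (use fA in auto)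
    have c2: "card A = card (A - B) + card (A \<inter> B)"
      using fA by (metis Int_Diff_disjoint Un_Diff_Int card_Un_disjoint finite_Diff finite_Int inf_commute)
    have c3: "card B = card (B - A) + card (A \<inter> B)"
      using fA by (metis Int_Diff_disjoint Un_Diff_Int card_Un_disjoint finite_Diff finite_Int inf_commute)
    show ?thesis unfolding e A_def[symmetric] B_def[symmetric] c1 using c2 c3 by presburger
  qed
  then show ?thesis by (auto simp: sum2_def symd_def)
qed

lemma key:
  assumes pc: "periodic_complex Ed Fa Vo bd iota" and W: "W \<subseteq> Vo"
    and f: "f \<in> Fa" "f \<notin> sum2 W bd" "u \<in> W" "f \<in> bd u"
  shows "\<forall>u'\<in>Vo. f \<in> bd u' \<longrightarrow> u' \<in> W"
proof -
  let ?F = "{v\<in>Vo. f \<in> bd v}"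
  let ?A = "{v\<in>W. f \<in> bd v}"
  have c: "card ?F = 2" "finite Vo" using pc f unfolding periodic_complex_def by auto
  have sub: "?A \<subseteq> ?F" using W by auto
  have fin: "finite ?F" using c by auto
  have le: "card ?A \<le> 2" using card_mono[OF fin sub] c by simp
  have ev: "even (card ?A)" using f(2) by (simp add: sum2_def)
  have "?A \<noteq> {}" using f by auto
  then have "card ?A \<noteq> 0" using finite_subset[OF sub fin] by simp
  then have "card ?A = 2" using le ev by presburger
  then have "?A = ?F" using card_subset_eq[OF fin sub] c by simp
  then show ?thesis by blast
qed

theorem lemma10:
  fixes Ed :: "'e set" and Fa :: "'f set" and Vo :: "'v set"
    and bd :: "'v \<Rightarrow> 'f set" and iota :: "'e \<Rightarrow> 'f set"
    and k :: nat and Xbar Xr :: "nat \<Rightarrow> 'f set" and XX EE M :: "'f set"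
  assumes "periodic_complex Ed Fa Vo bd iota"
    and "x_logical_basis Ed Fa Vo bd iota k Xbar"
    and "artificial_boundary Fa Vo bd k Xbar Xr XX"
    and "EE \<subseteq> Fa" and "EE \<inter> XX = {}"
    and "x_logical Ed Fa Vo bd iota M"
    and "\<exists>i<k. is_x_stabilizer Vo bd (symd M (Xbar i))"
    and "M \<subseteq> EE"
  shows "cut_set Fa Vo bd (EE \<union> XX)"
proof -
  note pc = assms(1)
  have finVo: "finite Vo" using pc unfolding periodic_complex_def by auto
  obtain i where i: "i < k" "is_x_stabilizer Vo bd (symd M (Xbar i))" using assms(7) by blast
  obtain W1 where W1: "W1 \<subseteq> Vo" "symd M (Xbar i) = sum2 W1 bd"
    using i unfolding is_x_stabilizer_def by blast
  have XrX: "Xr i \<subseteq> XX" "is_x_stabilizer Vo bd (symd (Xr i) (Xbar i))"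
    using assms(3) i(1) unfolding artificial_boundary_def by auto
  obtain W2 where W2: "W2 \<subseteq> Vo" "symd (Xr i) (Xbar i) = sum2 W2 bd"
    using XrX unfolding is_x_stabilizer_def by blast
  define W where "W = symd W1 W2"
  have WV: "W \<subseteq> Vo" using W1 W2 by (auto simp: W_def symd_def)
  have "sum2 W bd = symd (sum2 W1 bd) (sum2 W2 bd)"
    unfolding W_def by (rule sum2_symd; meson W1(1) W2(1) finVo finite_subset)
  also have "\<dots> = symd M (Xr i)" unfolding W1(2)[symmetric] W2(2)[symmetric]
    by (auto simp: symd_def)
  finally have sW: "sum2 W bd = symd M (Xr i)" .
  have sK: "sum2 W bd \<subseteq> EE \<union> XX" using sW XrX assms(8) by (auto simp: symd_def)
  have Mne: "M \<noteq> {}"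
  proof
    assume "M = {}"
    then have "is_x_stabilizer Vo bd M" unfolding is_x_stabilizer_def
      by (intro exI[of _ "{}"]) (auto simp: sum2_def)
    then show False using assms(6) unfolding x_logical_def by blast
  qed
  have "M \<subseteq> sum2 W bd" using sW XrX assms(5,8) by (auto simp: symd_def)
  then obtain f0 where f0: "f0 \<in> sum2 W bd" using Mne by blast
  have "W \<noteq> {}" using f0 by (auto simp: sum2_def)
  then obtain v where v: "v \<in> W" by blast
  have "W \<noteq> Vo"
  proof
    assume "W = Vo"
    have "f0 \<in> Fa \<Longrightarrow> card {u\<in>Vo. f0 \<in> bd u} = 2" using pc unfolding periodic_complex_def by auto
    moreover have "f0 \<notin> Fa \<Longrightarrow> {u\<in>Vo. f0 \<in> bd u} = {}" using pc unfolding periodic_complex_def by auto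
    ultimately have "even (card {u\<in>Vo. f0 \<in> bd u})" by (cases "f0 \<in> Fa") (simp, metis card.empty even_zero)
    then show False using f0 \<open>W = Vo\<close> by (simp add: sum2_def)
  qed
  then obtain v' where v': "v' \<in> Vo" "v' \<notin> W" using WV by blast
  have vV: "v \<in> Vo" using v WV by auto
  show ?thesis unfolding cut_set_def
  proof (rule bexI[OF _ vV], rule bexI[OF _ v'(1)], intro allI impI)
    fix fs vs assume H: "face_path Fa Vo bd fs vs \<and> hd fs \<in> bd v \<and> last fs \<in> bd v' \<and>
        v \<notin> set vs \<and> v' \<notin> set vs"
    show "set fs \<inter> (EE \<union> XX) \<noteq> {}"
    proof (rule notI)
      assume D: "set fs \<inter> (EE \<union> XX) = {}"
      have fp: "fs \<noteq> []" "length vs = length fs - 1" "set fs \<subseteq> Fa" "set vs \<subseteq> Vo"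
        "\<forall>j<length vs. fs ! j \<in> bd (vs ! j) \<and> fs ! (Suc j) \<in> bd (vs ! j)"
        using H unfolding face_path_def by auto
      have notin: "j < length fs \<Longrightarrow> fs ! j \<notin> sum2 W bd \<and> fs ! j \<in> Fa" for j
        using D sK fp(3) nth_mem by blast
      have "j < length fs \<Longrightarrow> \<forall>u'\<in>Vo. fs ! j \<in> bd u' \<longrightarrow> u' \<in> W" for j
      proof (induction j)
        case 0
        have "fs ! 0 \<in> bd v" using H fp(1) by (simp add: hd_conv_nth)
        then show ?case using key[OF pc WV _ _ v] notin[OF 0] by blast
      next
        case (Suc j)
        have jl: "j < length vs" using Suc.prems fp(2) by simp
        have vj: "vs ! j \<in> Vo" using jl fp(4) nth_mem by blast
        have "vs ! j \<in> W" using Suc fp(5) jl vj by auto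
        then show ?case using key[OF pc WV _ _ _ ] notin[OF Suc.prems] fp(5) jl by blast
      qed
      moreover have "last fs = fs ! (length fs - 1)" using fp(1) by (simp add: last_conv_nth)
      ultimately have "v' \<in> W" using H v' fp(1) by (metis diff_less length_greater_0_conv zero_less_one)
      then show False using v' by blast
    qed
  qed
qed

end
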